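(* Let $I$ be a 3-SAT instance and $E(I)$ the chore division instance constructed from it (see context), and let $(p,X)$ be a competitive equilibrium of $E(I)$. Let $C_r$ be a clause containing a literal on the variable $x_i$. Then: (1) if the literal is $x_i$ and $X_{a^i_1,b^i_2}>0$, then $p(m^r_i)\ge \tfrac{3\varepsilon}{2}$; (2) if the literal is $\neg x_i$ and $X_{a^i_1,b^i_2}=0$, then $p(m^r_i)\ge 2\varepsilon$.
   Context: Chore division with fixed earnings: agents $A$, chores $B$ each with supply one, disutility $d:A\times B\to(0,\infty)$, earnings $e:A\to\mathbb{R}_{\ge0}$, threshold $\tau$. A competitive equilibrium is $(p,X)$, $p\in\mathbb{R}^{B}_{\ge0}$, $X\in\mathbb{R}^{A\times B}_{\ge0}$, with (1) $X_{ab}>0$ only if $d(a,b)<\tau$ and $d(a,b)/p(b)\le d(a,b')/p(b')$ for all chores $b'$ (ratio with zero price is $+\infty$); (2) $\sum_b X_{ab}p(b)=e(a)$ for all $a$; (3) $\sum_a X_{ab}=1$ for all $b$. Construction $E(I)$: Let $I$ be a 3-SAT instance with variables $x_1,\dots,x_n$ and clauses $C_1,\dots,C_m$, each a disjunction of exactly three literals on three distinct variables. Fix constants $\tau>3$, $0<\varepsilon<1$ and $0<\varepsilon'<\varepsilon/2$. For each variable $x_i$ there are agents $a^i_1,a^i_2$ with $e(a^i_1)=e(a^i_2)=1$ and chores $b^i_1,b^i_2$, with $d(a^i_1,b^i_1)=1$, $d(a^i_1,b^i_2)=3$, $d(a^i_2,b^i_2)=1$. For each clause $C_r$ whose literals involve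 variables $x_i,x_j,x_k$ there are agents $n^r_i,n^r_j,n^r_k,\mathbf{n}^r$ and chores $m^r_i,m^r_j,m^r_k$; for each $\theta\in\{i,j,k\}$: if the literal is $x_\theta$, then $d(n^r_\theta,b^\theta_2)=d(\mathbf{n}^r,b^\theta_2)=1$ and $d(n^r_\theta,m^r_\theta)=d(\mathbf{n}^r,m^r_\theta)=\varepsilon$; if the literal is $\neg x_\theta$, then $d(n^r_\theta,b^\theta_1)=d(\mathbf{n}^r,b^\theta_1)=2/3$ and $d(n^r_\theta,m^r_\theta)=d(\mathbf{n}^r,m^r_\theta)=4\varepsilon/3$. All other disutilities equal $\tau$. Earnings: $e(n^r_\theta)=\varepsilon$ and $e(\mathbf{n}^r)=\#(C_r)\cdot\tfrac{\varepsilon}{2}+\overline{\#}(C_r)\cdot\varepsilon-\varepsilon'$, where $\#(C_r)$ and $\overline{\#}(C_r)$ are the numbers of unnegated and negated literals of $C_r$. *)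

theory Defs
  imports Complex_Main "HOL-Library.Extended_Real"
begin

definition ratio :: "real \<Rightarrow> real \<Rightarrow> ereal" where
  "ratio dv pr = (if pr = 0 then \<infinity> else ereal (dv / pr))"

definition competitive_equilibrium ::
  "'a set \<Rightarrow> 'b set \<Rightarrow> ('a \<Rightarrow> 'b \<Rightarrow> real) \<Rightarrow> ('a \<Rightarrow> real) \<Rightarrow> real
   \<Rightarrow> ('b \<Rightarrow> real) \<Rightarrow> ('a \<Rightarrow> 'b \<Rightarrow> real) \<Rightarrow> bool" where
  "competitive_equilibrium A B d e \<tau> p X \<longleftrightarrow>
     (\<forall>b\<in>B. p b \<ge> 0) \<and>
     (\<forall>a\<in>A. \<forall>b\<in>B. X a b \<ge> 0) \<and>
     (\<forall>a\<in>A. \<forall>b\<in>B. X a b > 0 \<longrightarrow>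
        d a b < \<tau> \<and> (\<forall>b'\<in>B. ratio (d a b) (p b) \<le> ratio (d a b') (p b'))) \<and>
     (\<forall>a\<in>A. (\<Sum>b\<in>B. X a b * p b) = e a) \<and>
     (\<forall>b\<in>B. (\<Sum>a\<in>A. X a b) = 1)"

text \<open>A literal is a pair (variable index, polarity); polarity True means the
  unnegated literal x_i, False means the negated literal (not x_i).\<close>
type_synonym literal = "nat \<times> bool"
type_synonym clause = "literal list"

definition valid_3sat :: "nat \<Rightarrow> clause list \<Rightarrow> bool" where
  "valid_3sat n cls \<longleftrightarrow>
     (\<forall>c\<in>set cls. length c = 3 \<and> distinct (map fst c) \<and> (\<forall>l\<in>set c. fst l < n))"

datatype agent =
    VA1 nat
  | VA2 nat
  | CA nat nat         \<comment> \<open>n^r_theta (clause r, variable theta)\<close>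
  | CBold nat

datatype chore =
    VB1 nat
  | VB2 nat
  | CM nat nat

definition E_agents :: "nat \<Rightarrow> clause list \<Rightarrow> agent set" where
  "E_agents n cls =
     VA1 ` {..<n} \<union> VA2 ` {..<n} \<union>
     {CA r \<theta> | r \<theta>. r < length cls \<and> \<theta> \<in> fst ` set (cls ! r)} \<union>
     CBold ` {..<length cls}"

definition E_chores :: "nat \<Rightarrow> clause list \<Rightarrow> chore set" where
  "E_chores n cls =
     VB1 ` {..<n} \<union> VB2 ` {..<n} \<union>
     {CM r \<theta> | r \<theta>. r < length cls \<and> \<theta> \<in> fst ` set (cls ! r)}"

text \<open>Disutility of a clause agent (either n^r_theta or bold n^r) of clause r
  for a chore, where for n^r_theta only the variable theta is relevant.\<close>
definition clause_dis :: "clause list \<Rightarrow> real \<Rightarrow> real \<Rightarrow> nat \<Rightarrow> (nat \<Rightarrow> bool) \<Rightarrow> chore \<Rightarrow> real" where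
  "clause_dis cls \<tau> \<epsilon> r rel b =
     (case b of
        VB2 j \<Rightarrow> if rel j \<and> (j, True) \<in> set (cls ! r) then 1 else \<tau>
      | VB1 j \<Rightarrow> if rel j \<and> (j, False) \<in> set (cls ! r) then 2/3 else \<tau>
      | CM r' j \<Rightarrow> if r' = r \<and> rel j \<and> (j, True) \<in> set (cls ! r) then \<epsilon>
                  else if r' = r \<and> rel j \<and> (j, False) \<in> set (cls ! r) then 4 * \<epsilon> / 3
                  else \<tau>)"

fun E_dis :: "clause list \<Rightarrow> real \<Rightarrow> real \<Rightarrow> agent \<Rightarrow> chore \<Rightarrow> real" where
  "E_dis cls \<tau> \<epsilon> (VA1 i) b =
     (if b = VB1 i then 1 else if b = VB2 i then 3 else \<tau>)"
| "E_dis cls \<tau> \<epsilon> (VA2 i) b = (if b = VB2 i then 1 else \<tau>)"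
| "E_dis cls \<tau> \<epsilon> (CA r \<theta>) b = clause_dis cls \<tau> \<epsilon> r (\<lambda>j. j = \<theta>) b"
| "E_dis cls \<tau> \<epsilon> (CBold r) b = clause_dis cls \<tau> \<epsilon> r (\<lambda>j. True) b"

definition num_pos :: "clause \<Rightarrow> nat" where
  "num_pos c = length (filter snd c)"

definition num_neg :: "clause \<Rightarrow> nat" where
  "num_neg c = length (filter (\<lambda>l. \<not> snd l) c)"

fun E_earn :: "clause list \<Rightarrow> real \<Rightarrow> real \<Rightarrow> agent \<Rightarrow> real" where
  "E_earn cls \<epsilon> \<epsilon>' (VA1 i) = 1"
| "E_earn cls \<epsilon> \<epsilon>' (VA2 i) = 1"
| "E_earn cls \<epsilon> \<epsilon>' (CA r \<theta>) = \<epsilon>"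
| "E_earn cls \<epsilon> \<epsilon>' (CBold r) =
     real (num_pos (cls ! r)) * (\<epsilon> / 2) + real (num_neg (cls ! r)) * \<epsilon> - \<epsilon>'"

end

theory Submission
  imports Defs
begin

lemma ce_zero:
  assumes "competitive_equilibrium A B d e \<tau> p X" "a\<in>A" "b\<in>B" "\<not> d a b < \<tau>"
  shows "X a b = 0"
proof -
  have "X a b \<ge> 0" "X a b > 0 \<longrightarrow> d a b < \<tau>" using assms unfolding competitive_equilibrium_def by auto
  then show ?thesis using assms(4) by linarith
qed

lemma ce_mpb:
  assumes "competitive_equilibrium A B d e \<tau> p X" "a\<in>A" "b\<in>B" "b'\<in>B" "X a b > 0" "p b' > 0"
  shows "p b > 0 \<and> d a b * p b' \<le> d a b' * p b"
proof -
  have r: "ratio (d a b) (p b) \<le> ratio (d a b') (p b')"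
    using assms unfolding competitive_equilibrium_def by blast
  have pb: "p b \<ge> 0" using assms unfolding competitive_equilibrium_def by blast
  have "p b \<noteq> 0"
  proof
    assume "p b = 0"
    then show False using r assms(6) by (simp add: ratio_def)
  qed
  then have "p b > 0" using pb by simp
  moreover have "d a b / p b \<le> d a b' / p b'" using r \<open>p b > 0\<close> assms(6) by (simp add: ratio_def)
  ultimately show ?thesis using assms(6) by (simp add: field_simps)
qed

lemma ce_earn_two:
  assumes ce: "competitive_equilibrium A B d e \<tau> p X" and fin: "finite B" and a: "a\<in>A"
    and b0: "b0\<in>B" and b1: "b1 \<in> B" and ne: "b0 \<noteq> b1"
    and oth: "\<forall>b\<in>B. b\<noteq>b0 \<and> b \<noteq> b1 \<longrightarrow> \<not> d a b < \<tau>"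
  shows "X a b0 * p b0 + X a b1 * p b1 = e a"
proof -
  have "e a = (\<Sum>b\<in>B. X a b * p b)" using ce a unfolding competitive_equilibrium_def by simp
  also have "\<dots> = (\<Sum>b\<in>{b0,b1}. X a b * p b)"
    apply (rule sum.mono_neutral_right[OF fin])
    using b0 b1 ce_zero[OF ce a] oth by auto
  also have "\<dots> = X a b0 * p b0 + X a b1 * p b1" using ne by simp
  finally show ?thesis by simp
qed

lemma ce_earn_one:
  assumes ce: "competitive_equilibrium A B d e \<tau> p X" and fin: "finite B" and a: "a\<in>A"
    and b0: "b0\<in>B"
    and oth: "\<forall>b\<in>B. b\<noteq>b0 \<longrightarrow> \<not> d a b < \<tau>"
  shows "X a b0 * p b0 = e a"
proof -
  have "e a = (\<Sum>b\<in>B. X a b * p b)" using ce a unfolding competitive_equilibrium_def by simp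
  also have "\<dots> = (\<Sum>b\<in>{b0}. X a b * p b)"
    apply (rule sum.mono_neutral_right[OF fin])
    using b0 ce_zero[OF ce a] oth by auto
  finally show ?thesis by simp
qed

lemma ce_le1:
  assumes ce: "competitive_equilibrium A B d e \<tau> p X" and fin: "finite A"
    and a: "a\<in>A" "a'\<in>A" "a\<noteq>a'" and b: "b\<in>B"
  shows "X a b + X a' b \<le> 1"
proof -
  have "X a b + X a' b = (\<Sum>x\<in>{a,a'}. X x b)" using a by simp
  also have "\<dots> \<le> (\<Sum>x\<in>A. X x b)"
    apply (rule sum_mono2[OF fin])
    using a ce b unfolding competitive_equilibrium_def by auto
  also have "\<dots> = 1" using ce b unfolding competitive_equilibrium_def by simp
  finally show ?thesis .
qed

lemma ce_someone:
  assumes ce: "competitive_equilibrium A B d e \<tau> p X" and fin: "finite A"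
    and a: "a0\<in>A" "a1\<in>A" and b: "b\<in>B"
    and oth: "\<forall>a\<in>A. a\<noteq>a0 \<and> a \<noteq> a1 \<longrightarrow> \<not> d a b < \<tau>"
  shows "X a0 b > 0 \<or> X a1 b > 0"
proof (rule ccontr)
  assume "\<not> ?thesis"
  moreover have "X a0 b \<ge> 0" "X a1 b \<ge> 0" using ce a b unfolding competitive_equilibrium_def by auto
  ultimately have z: "X a0 b = 0" "X a1 b = 0" by auto
  have "(\<Sum>x\<in>A. X x b) = 0"
    apply (rule sum.neutral)
    using z ce_zero[OF ce _ b] oth by metis
  then show False using ce b unfolding competitive_equilibrium_def by simp
qed

lemma fin_agents: "finite (E_agents n cls)"
proof -
  have "{CA r \<theta> | r \<theta>. r < length cls \<and> \<theta> \<in> fst ` set (cls ! r)}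
        \<subseteq> (\<lambda>(r,\<theta>). CA r \<theta>) ` (SIGMA r:{..<length cls}. fst ` set (cls ! r))" by auto
  moreover have "finite ((\<lambda>(r,\<theta>). CA r \<theta>) ` (SIGMA r:{..<length cls}. fst ` set (cls ! r)))" by auto
  ultimately have "finite {CA r \<theta> | r \<theta>. r < length cls \<and> \<theta> \<in> fst ` set (cls ! r)}" by (rule finite_subset)
  then show ?thesis unfolding E_agents_def by auto
qed

lemma fin_chores: "finite (E_chores n cls)"
proof -
  have "{CM r \<theta> | r \<theta>. r < length cls \<and> \<theta> \<in> fst ` set (cls ! r)}
        \<subseteq> (\<lambda>(r,\<theta>). CM r \<theta>) ` (SIGMA r:{..<length cls}. fst ` set (cls ! r))" by auto
  moreover have "finite ((\<lambda>(r,\<theta>). CM r \<theta>) ` (SIGMA r:{..<length cls}. fst ` set (cls ! r)))" by auto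
  ultimately have "finite {CM r \<theta> | r \<theta>. r < length cls \<and> \<theta> \<in> fst ` set (cls ! r)}" by (rule finite_subset)
  then show ?thesis unfolding E_chores_def by auto
qed

theorem mainTheorem3:
  fixes n :: nat and cls :: "clause list"
    and \<tau> \<epsilon> \<epsilon>' :: real
    and p :: "chore \<Rightarrow> real" and X :: "agent \<Rightarrow> chore \<Rightarrow> real"
    and r i :: nat and pol :: bool
  assumes inst: "valid_3sat n cls"
    and tau: "\<tau> > 3"
    and eps: "0 < \<epsilon>" "\<epsilon> < 1"
    and eps': "0 < \<epsilon>'" "\<epsilon>' < \<epsilon> / 2"
    and ce: "competitive_equilibrium (E_agents n cls) (E_chores n cls)
               (E_dis cls \<tau> \<epsilon>) (E_earn cls \<epsilon> \<epsilon>') \<tau> p X"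
    and r: "r < length cls"
    and lit: "(i, pol) \<in> set (cls ! r)"
  shows "(pol \<and> X (VA1 i) (VB2 i) > 0 \<longrightarrow> p (CM r i) \<ge> 3 * \<epsilon> / 2) \<and>
         (\<not> pol \<and> X (VA1 i) (VB2 i) = 0 \<longrightarrow> p (CM r i) \<ge> 2 * \<epsilon>)"
proof -
  let ?A = "E_agents n cls" and ?B = "E_chores n cls" and ?d = "E_dis cls \<tau> \<epsilon>"
  have cl: "distinct (map fst (cls ! r))" "\<forall>l\<in>set (cls ! r). fst l < n"
    using inst r unfolding valid_3sat_def by auto
  have inn: "i < n" using cl(2) lit by auto
  have nopp: "(i, \<not> pol) \<notin> set (cls ! r)"
  proof
    assume h: "(i, \<not> pol) \<in> set (cls ! r)"
    have "inj_on fst (set (cls ! r))" using cl(1) by (simp add: distinct_map)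
    then have "(i, \<not> pol) = (i, pol)" using h lit by (metis fst_conv inj_on_def)
    then show False by simp
  qed
  have ifst: "i \<in> fst ` set (cls ! r)" using lit by force
  have mem: "VA1 i \<in> ?A" "VA2 i \<in> ?A" "CA r i \<in> ?A" "CBold r \<in> ?A"
    "VB1 i \<in> ?B" "VB2 i \<in> ?B" "CM r i \<in> ?B"
    using inn r ifst unfolding E_agents_def E_chores_def by auto
  have nonneg: "\<And>b. b \<in> ?B \<Longrightarrow> p b \<ge> 0" "\<And>a b. a \<in> ?A \<Longrightarrow> b \<in> ?B \<Longrightarrow> X a b \<ge> 0"
    using ce unfolding competitive_equilibrium_def by auto
  have taud: "\<not> \<tau> < \<tau>" by simp
  have e2: "X (VA2 i) (VB2 i) * p (VB2 i) = 1"
    using ce_earn_one[OF ce fin_chores mem(2) mem(6)] taud by simp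
  have e1: "X (VA1 i) (VB1 i) * p (VB1 i) + X (VA1 i) (VB2 i) * p (VB2 i) = 1"
    using ce_earn_two[OF ce fin_chores mem(1) mem(5) mem(6)] taud by simp
  have someone: "X (CA r i) (CM r i) > 0 \<or> X (CBold r) (CM r i) > 0"
  proof (rule ce_someone[OF ce fin_agents mem(3) mem(4) mem(7)], intro ballI impI)
    fix a assume "a \<in> ?A" "a \<noteq> CA r i \<and> a \<noteq> CBold r"
    then show "\<not> ?d a (CM r i) < \<tau>"
      by (cases a) (auto simp: clause_dis_def)
  qed
  then obtain c where c: "c \<in> ?A" "X c (CM r i) > 0" "c = CA r i \<or> c = CBold r"
    using mem by blast
  have x11: "X (VA1 i) (VB1 i) \<le> 1"
    using ce_le1[OF ce fin_agents mem(1) mem(2) _ mem(5)] nonneg(2)[OF mem(2) mem(5)] by simp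
  have p1: "p (VB1 i) \<ge> 0" "p (VB2 i) \<ge> 0" using nonneg mem by auto
  have x0: "X (VA1 i) (VB1 i) \<ge> 0" "X (VA1 i) (VB2 i) \<ge> 0" "X (VA2 i) (VB2 i) \<ge> 0"
    using nonneg mem by auto
  have le11: "X (VA1 i) (VB1 i) * p (VB1 i) \<le> p (VB1 i)"
    using mult_right_mono[OF x11 p1(1)] by simp
  show ?thesis
  proof (intro conjI impI)
    assume h: "pol \<and> X (VA1 i) (VB2 i) > 0"
    have pb2: "p (VB2 i) > 0" using e2 p1 by (metis less_eq_real_def mult_zero_right zero_neq_one)
    have r12: "3 * p (VB1 i) \<le> p (VB2 i)"
    proof (cases "p (VB1 i) > 0")
      case True
      then show ?thesis using ce_mpb[OF ce mem(1) mem(6) mem(5)] h by simp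
    next
      case False then show ?thesis using p1 by simp
    qed
    have s: "X (VA1 i) (VB2 i) + X (VA2 i) (VB2 i) \<le> 1"
      using ce_le1[OF ce fin_agents mem(1) mem(2) _ mem(6)] by simp
    have "(X (VA1 i) (VB2 i) + X (VA2 i) (VB2 i)) * p (VB2 i) \<le> p (VB2 i)"
      using s pb2 by (simp add: mult_left_le_one_le x0)
    then have P2: "p (VB2 i) \<ge> 3/2" using e1 e2 le11 r12 by (simp add: algebra_simps)
    have dv: "?d c (CM r i) = \<epsilon>" "?d c (VB2 i) = 1"
      using c(3) h lit by (auto simp: clause_dis_def)
    have "\<epsilon> * p (VB2 i) \<le> p (CM r i)"
      using ce_mpb[OF ce c(1) mem(7) mem(6) c(2) pb2] dv by simp
    moreover have "\<epsilon> * (3/2) \<le> \<epsilon> * p (VB2 i)" using P2 eps by simp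
    ultimately show "p (CM r i) \<ge> 3 * \<epsilon> / 2" by simp
  next
    assume h: "\<not> pol \<and> X (VA1 i) (VB2 i) = 0"
    have "X (VA1 i) (VB1 i) * p (VB1 i) = 1" using e1 h by simp
    then have P1: "p (VB1 i) \<ge> 1" using le11 by simp
    have dv: "?d c (CM r i) = 4 * \<epsilon> / 3" "?d c (VB1 i) = 2/3"
      using c(3) h lit nopp by (auto simp: clause_dis_def)
    have "4 * \<epsilon> / 3 * p (VB1 i) \<le> 2/3 * p (CM r i)"
      using ce_mpb[OF ce c(1) mem(7) mem(5) c(2)] P1 dv by simp
    moreover have "4 * \<epsilon> / 3 \<le> 4 * \<epsilon> / 3 * p (VB1 i)" using P1 eps by simp
    ultimately show "p (CM r i) \<ge> 2 * \<epsilon>" by simp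
  qed
qed

end
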